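(* Let $\lambda\in\mathbb{C}$, $\lambda\ne1$, $\alpha\in\mathbb{C}$, $m\in\mathbb{Z}_{\ge0}$, $b,c\in\mathbb{C}\setminus\{0\}$, and let $S_n(x)\sim\left(\left(\frac{e^{(\lambda-1)t}-\lambda}{1-\lambda}\right)^{\alpha},\ \frac{t}{e^{ct}(1+bt)^m}\right)$. Then for $n\ge1$, $$S_n(x)=(-1)^{mn}\sum_{l=0}^{n-1}C_{mn}\!\left(l;-\frac{nc}{b}\right)(nc)^l\binom{n-1}{l}A_{n-l}^{(\alpha)}(x\mid\lambda).$$
   Context: For invertible $g(t)$ (nonzero constant term) and delta series $f(t)$ ($f(0)=0$, nonzero coefficient of $t$), the Sheffer sequence $S_n(x)\sim(g(t),f(t))$ is the unique polynomial sequence with $\sum_{k\ge0}S_k(y)\frac{t^k}{k!}=\frac{1}{g(\bar f(t))}e^{y\bar f(t)}$ for all $y\in\mathbb{C}$, where $\bar f$ is the compositional inverse of $f$. Complex powers of series with constant term $1$ are defined by $h^a=\exp(a\log h)$. For $a\ne0$, the Poisson–Charlier polynomials are $C_N(x;a)=\sum_{k=0}^N\binom{N}{k}(-1)^{N-k}a^{-k}(x)_k$, where $(x)_k=x(x-1)\cdots(x-k+1)$. The Frobenius-type Eulerian polynomials of order $\alpha$ are defined by $\left(\frac{1-\lambda}{e^{(\lambda-1)t}-\lambda}\right)^{\alpha}e^{xt}=\sum_{n\ge0}A_n^{(\alpha)}(x\mid\lambda)\frac{t^n}{n!}$. *)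

theory Defs
  imports Complex_Main "HOL-Computational_Algebra.Formal_Power_Series" "HOL-Computational_Algebra.Polynomial"
begin

text \<open>Complex power of a formal power series h with constant term 1:
  h^a = exp(a log h), where log h = log(1 + (h - 1)) = fps_ln 1 composed with h - 1.\<close>
definition fps_cpow :: "complex fps \<Rightarrow> complex \<Rightarrow> complex fps" where
  "fps_cpow h a = fps_exp a oo (fps_ln 1 oo (h - 1))"

definition sheffer :: "complex fps \<Rightarrow> complex fps \<Rightarrow> (nat \<Rightarrow> complex poly) \<Rightarrow> bool" where
  "sheffer g f S \<longleftrightarrow>
     (\<forall>y. Abs_fps (\<lambda>k. poly (S k) y / fact k)
          = inverse (g oo fps_inv f) * (fps_exp y oo fps_inv f))"

definition ffact_c :: "complex \<Rightarrow> nat \<Rightarrow> complex" where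
  "ffact_c x k = (\<Prod>i<k. x - of_nat i)"

definition poisson_charlier :: "nat \<Rightarrow> complex \<Rightarrow> complex \<Rightarrow> complex" where
  "poisson_charlier N x a =
     (\<Sum>k=0..N. of_nat (N choose k) * (-1) ^ (N - k) * inverse a ^ k * ffact_c x k)"

definition frob_euler :: "nat \<Rightarrow> complex \<Rightarrow> complex \<Rightarrow> complex \<Rightarrow> complex" where
  "frob_euler n alpha x lam =
     fact n * fps_nth (fps_cpow (fps_const (1 - lam) * inverse (fps_exp (lam - 1) - fps_const lam)) alpha
               * fps_exp x) n"

end

theory Submission
  imports Defs
begin
unbundle fps_syntax

lemma lag_key1:
  fixes phi :: "complex fps"
  assumes p0: "phi $ 0 \<noteq> 0" and j: "j \<ge> 1"
  shows "(fps_deriv (fps_X * inverse phi) * phi ^ (j+1)) $ j = 0"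
proof -
  define psi where "psi = inverse phi"
  have pp: "phi * psi = 1" using p0 unfolding psi_def by (simp add: inverse_mult_eq_1')
  have dpsi: "fps_deriv psi = - fps_deriv phi * psi^2" unfolding psi_def using fps_inverse_deriv[OF p0] by simp
  have dpow: "fps_deriv (phi ^ j) = fps_const (of_nat j) * fps_deriv phi * phi ^ (j - 1)"
    by (rule fps_deriv_power)
  have pj: "phi ^ (j+1) = phi * phi * phi^(j-1)" using j
    by (metis Suc_diff_le add.commute diff_Suc_1 mult.assoc plus_1_eq_Suc power_Suc)
  have dX: "fps_deriv (fps_X * psi) = psi + fps_X * fps_deriv psi" by simp
  have "fps_deriv (fps_X * psi) * phi ^ (j+1) = (psi + fps_X * fps_deriv psi) * (phi * phi * phi^(j-1))"
    unfolding pj dX by (rule refl)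
  also have "\<dots> = (phi*psi) * phi * phi^(j-1) - fps_X * fps_deriv phi * (phi*psi)^2 * phi^(j-1)"
    by (simp add: dpsi algebra_simps power2_eq_square)
  also have "\<dots> = phi * phi^(j-1) - fps_X * (fps_deriv phi * phi^(j-1))"
    by (simp add: pp)
  also have "phi * phi^(j-1) = phi ^ j" using j
    by (metis Suc_diff_le diff_Suc_1 power_Suc)
  finally have eq: "fps_deriv (fps_X * psi) * phi ^ (j+1) = phi ^ j - fps_X * (fps_deriv phi * phi^(j-1))" .
  have "(fps_deriv (phi ^ j)) $ (j - 1) = of_nat j * (fps_deriv phi * phi^(j-1)) $ (j-1)"
    by (simp add: dpow mult.assoc)
  moreover have "(fps_deriv (phi ^ j)) $ (j - 1) = of_nat j * (phi ^ j) $ j"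
    using j by simp
  ultimately have "(fps_deriv phi * phi^(j-1)) $ (j-1) = (phi ^ j) $ j"
    using j by (metis mult_cancel_left of_nat_eq_0_iff not_one_le_zero)
  moreover have "(fps_X * (fps_deriv phi * phi^(j-1))) $ j = (fps_deriv phi * phi^(j-1)) $ (j-1)"
    using j by simp
  ultimately have "(phi ^ j - fps_X * (fps_deriv phi * phi^(j-1))) $ j = 0" by simp
  then show ?thesis using eq unfolding psi_def by simp
qed

lemma lag_key0:
  fixes phi :: "complex fps"
  assumes p0: "phi $ 0 \<noteq> 0"
  shows "(fps_deriv (fps_X * inverse phi) * phi) $ 0 = 1"
  using p0 by (simp add: fps_mult_nth)

lemma lag_mono:
  fixes phi :: "complex fps"
  assumes p0: "phi $ 0 \<noteq> 0" and n: "n \<ge> 1" and k: "k \<le> n"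
  shows "(fps_deriv ((fps_X * inverse phi) ^ k) * phi ^ n) $ (n - 1) = (if k = n then of_nat n else 0)"
proof (cases "k = 0")
  case True then show ?thesis using n by simp
next
  case False
  define psi where "psi = inverse phi"
  define f where "f = fps_X * psi"
  have pp: "psi * phi = 1" using p0 unfolding psi_def by (simp add: inverse_mult_eq_1)
  have pow: "psi ^ (k-1) * phi ^ n = phi ^ (n - k + 1)"
  proof -
    have ar: "k - 1 + (n - k + 1) = n" using k False by arith
    have "phi ^ n = phi ^ (k - 1 + (n - k + 1))" by (simp only: ar)
    then have "phi ^ n = phi ^ (k-1) * phi ^ (n-k+1)" by (simp only: power_add)
    then show ?thesis by (simp add: mult.assoc[symmetric] power_mult_distrib[symmetric] pp)
  qed
  have fk: "f ^ (k-1) = fps_X^(k-1) * psi^(k-1)" unfolding f_def by (rule power_mult_distrib)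
  have "fps_deriv (f ^ k) * phi ^ n = fps_const (of_nat k) * fps_deriv f * f ^ (k-1) * phi ^ n"
    by (simp only: fps_deriv_power)
  also have "\<dots> = fps_const (of_nat k) * (fps_X^(k-1) * (fps_deriv f * (psi^(k-1) * phi ^ n)))"
    unfolding fk by (simp only: mult_ac)
  also have "\<dots> = fps_const (of_nat k) * (fps_X^(k-1) * (fps_deriv f * phi ^ (n - k + 1)))"
    by (simp only: pow)
  finally have eq: "(fps_deriv (f ^ k) * phi ^ n) $ (n - 1) = of_nat k * (fps_deriv f * phi ^ (n - k + 1)) $ (n - k)"
    using False k n by (simp add: fps_X_power_mult_nth)
  show ?thesis
  proof (cases "k = n")
    case True
    then show ?thesis using eq lag_key0[OF p0] unfolding f_def psi_def by simp
  next
    case kn: False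
    have "(fps_deriv f * phi ^ (n - k + 1)) $ (n - k) = 0"
      unfolding f_def psi_def by (rule lag_key1[OF p0]) (use k kn in simp)
    then show ?thesis using eq kn unfolding f_def psi_def by simp
  qed
qed

lemma lag_tail:
  fixes phi T :: "complex fps"
  assumes p0: "phi $ 0 \<noteq> 0" and n: "n \<ge> 1"
  shows "(fps_deriv ((fps_X ^ (n+1) * T) oo (fps_X * inverse phi)) * phi ^ n) $ (n - 1) = 0"
proof -
  define psi where "psi = inverse phi"
  define f where "f = fps_X * psi"
  have f0: "f $ 0 = 0" unfolding f_def by simp
  have "(fps_X ^ (n+1) * T) oo f = (fps_X ^ (n+1) oo f) * (T oo f)"
    by (rule fps_compose_mult_distrib[OF f0])
  also have "fps_X ^ (n+1) oo f = f ^ (n+1)" by (rule fps_X_power_compose[OF f0])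
  finally have "(fps_X ^ (n+1) * T) oo f = f ^ (n+1) * (T oo f)" .
  moreover have gen: "\<And>U. fps_deriv (f ^ (n+1) * U) = f ^ n * (fps_const (of_nat (n+1)) * fps_deriv f * U + f * fps_deriv U)"
    by (simp only: fps_deriv_mult fps_deriv_power) (simp add: algebra_simps)
  moreover have fn: "f ^ n = fps_X ^ n * psi ^ n" unfolding f_def by (rule power_mult_distrib)
  ultimately have "fps_deriv ((fps_X ^ (n+1) * T) oo f) * phi ^ n
     = fps_X ^ n * (psi ^ n * (fps_const (of_nat (n+1)) * fps_deriv f * (T oo f) + f * fps_deriv (T oo f)) * phi ^ n)"
    by (simp only: mult_ac)
  then show ?thesis using n unfolding f_def[symmetric] psi_def[symmetric] by (simp only: fps_X_power_mult_nth) simp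
qed

lemma fps_decomp:
  fixes G :: "complex fps"
  shows "G = (\<Sum>k=0..n. fps_const (G $ k) * fps_X ^ k) + fps_X ^ (n+1) * fps_shift (n+1) G"
proof (rule fps_ext)
  fix i
  have "(\<Sum>k=0..n. fps_const (G $ k) * fps_X ^ k) $ i = (if i \<le> n then G $ i else 0)"
  proof -
    have "(\<Sum>k=0..n. fps_const (G $ k) * fps_X ^ k) $ i = (\<Sum>k=0..n. if k = i then G $ i else 0)"
      unfolding fps_sum_nth by (rule sum.cong) (simp_all add: fps_X_power_nth)
    also have "\<dots> = (if i \<le> n then G $ i else 0)" by (simp add: sum.delta)
    finally show ?thesis .
  qed
  then show "G $ i = ((\<Sum>k=0..n. fps_const (G $ k) * fps_X ^ k) + fps_X ^ (n+1) * fps_shift (n+1) G) $ i"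
    unfolding fps_add_nth fps_X_power_mult_nth by auto
qed

lemma lagrange:
  fixes phi G :: "complex fps"
  assumes p0: "phi $ 0 \<noteq> 0" and n: "n \<ge> 1"
  shows "(fps_deriv (G oo (fps_X * inverse phi)) * phi ^ n) $ (n - 1) = of_nat n * G $ n"
proof -
  define f where "f = fps_X * inverse phi"
  have f0: "f $ 0 = 0" unfolding f_def by simp
  define Tl where "Tl = ((fps_X ^ (n+1) * fps_shift (n+1) G) oo f)"
  have tl: "(fps_deriv Tl * phi ^ n) $ (n-1) = 0" unfolding Tl_def f_def by (rule lag_tail[OF p0 n])
  have "G oo f = (\<Sum>k=0..n. fps_const (G $ k) * f ^ k) + Tl"
    unfolding Tl_def
    apply (subst fps_decomp[of G n])
    apply (simp add: fps_compose_add_distrib fps_compose_sum_distrib fps_const_mult_apply_left[symmetric]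
         fps_X_power_compose[OF f0])
    done
  then have "(fps_deriv (G oo f) * phi ^ n) $ (n - 1) =
     (\<Sum>k=0..n. G $ k * (fps_deriv (f ^ k) * phi ^ n) $ (n - 1))"
    using tl by (simp add: fps_deriv_sum distrib_right sum_distrib_right fps_sum_nth mult.assoc)
  also have "\<dots> = (\<Sum>k=0..n. G $ k * (if k = n then of_nat n else 0))"
    by (rule sum.cong) (use lag_mono[OF p0 n] in \<open>auto simp: f_def simp del: of_nat_Suc\<close>)
  also have "\<dots> = (\<Sum>k=0..n. if k = n then G $ k * of_nat n else 0)"
    by (rule sum.cong) auto
  also have "\<dots> = of_nat n * G $ n" by (simp add: mult.commute)
  finally show ?thesis unfolding f_def .
qed


lemma dL:
  fixes h :: "complex fps"
  assumes h0: "h $ 0 = 1"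
  shows "fps_deriv (fps_ln 1 oo (h - 1)) = inverse h * fps_deriv h"
proof -
  have b0: "(h - 1) $ 0 = 0" using h0 by simp
  have c: "(1 + fps_X) oo (h - 1) = h"
    using b0 by (simp add: fps_compose_add_distrib)
  have "fps_deriv (fps_ln 1 oo (h - 1)) = (fps_deriv (fps_ln 1) oo (h - 1)) * fps_deriv (h - 1)"
    by (rule fps_compose_deriv[OF b0])
  also have "fps_deriv (fps_ln 1) = inverse (1 + fps_X)" by (simp add: fps_ln_deriv)
  also have "inverse (1 + fps_X) oo (h - 1) = inverse ((1 + fps_X) oo (h - 1))"
    by (rule fps_inverse_compose[OF b0]) simp
  finally show ?thesis by (simp add: c)
qed

lemma dE:
  fixes B :: "complex fps"
  assumes b0: "B $ 0 = 0"
  shows "fps_deriv (fps_exp a oo B) = fps_const a * (fps_exp a oo B) * fps_deriv B"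
  using fps_compose_deriv[OF b0, of "fps_exp a"]
  by (simp add: fps_const_mult_apply_left)

lemma cpow_inv:
  fixes h :: "complex fps"
  assumes h0: "h $ 0 = 1"
  shows "fps_cpow (inverse h) a * fps_cpow h a = 1"
proof -
  have h0': "h $ 0 \<noteq> 0" using h0 by simp
  have ih0: "inverse h $ 0 = 1" using h0 by simp
  define L1 where "L1 = fps_ln 1 oo (h - 1)"
  define L2 where "L2 = fps_ln 1 oo (inverse h - 1)"
  have L10: "L1 $ 0 = 0" unfolding L1_def by simp
  have L20: "L2 $ 0 = 0" unfolding L2_def by simp
  have hh: "inverse h * h = 1" using h0' by (simp add: inverse_mult_eq_1)
  have d1: "fps_deriv L1 = inverse h * fps_deriv h" unfolding L1_def by (rule dL[OF h0])
  have "fps_deriv L2 = inverse (inverse h) * fps_deriv (inverse h)" unfolding L2_def by (rule dL[OF ih0])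
  also have "\<dots> = h * (- fps_deriv h * (inverse h)^2)"
    using h0' by (simp add: fps_inverse_deriv)
  also have "\<dots> = - (inverse h * h) * (inverse h * fps_deriv h)"
    by (simp add: power2_eq_square algebra_simps)
  finally have d2: "fps_deriv L2 = - (inverse h * fps_deriv h)" by (simp add: hh)
  define P where "P = (fps_exp a oo L2) * (fps_exp a oo L1)"
  have "fps_deriv P = fps_const a * P * (fps_deriv L1 + fps_deriv L2)"
    unfolding P_def fps_deriv_mult dE[OF L10] dE[OF L20] by (simp add: algebra_simps)
  then have "fps_deriv P = 0" by (simp add: d1 d2)
  moreover have "P $ 0 = 1" unfolding P_def by (simp add: fps_mult_nth)
  ultimately have "P = 1" by (simp add: fps_deriv_eq_0_iff)
  then show ?thesis unfolding P_def L1_def L2_def fps_cpow_def .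
qed


lemma binom_nth:
  "((1 + fps_const (b::complex) * fps_X) ^ N) $ i = of_nat (N choose i) * b ^ i"
proof (induction N arbitrary: i)
  case 0 then show ?case by simp
next
  case (Suc N)
  have "(1 + fps_const b * fps_X) ^ Suc N = (1 + fps_const b * fps_X) ^ N + fps_X * (fps_const b * (1 + fps_const b * fps_X) ^ N)"
    by (simp add: algebra_simps)
  then have "((1 + fps_const b * fps_X) ^ Suc N) $ i = of_nat (N choose i) * b ^ i + (if i = 0 then 0 else b * (of_nat (N choose (i - 1)) * b ^ (i - 1)))"
    by (simp add: Suc.IH)
  also have "\<dots> = of_nat (Suc N choose i) * b ^ i"
  proof (cases i)
    case 0 then show ?thesis by simp
  next
    case (Suc j) then show ?thesis by (simp add: algebra_simps)
  qed
  finally show ?case .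
qed

lemma phi_nth:
  fixes b c :: complex
  shows "((fps_exp c * (1 + fps_const b * fps_X) ^ m) ^ n) $ l =
    (\<Sum>k=0..l. of_nat ((m*n) choose k) * b ^ k * (of_nat n * c) ^ (l - k) / fact (l - k))"
proof -
  have "(fps_exp c * (1 + fps_const b * fps_X) ^ m) ^ n = (1 + fps_const b * fps_X) ^ (m*n) * fps_exp (of_nat n * c)"
    by (simp add: power_mult_distrib power_mult fps_exp_power_mult)
  then show ?thesis by (simp add: fps_mult_nth binom_nth)
qed

lemma ffact_le:
  assumes "k \<le> l"
  shows "ffact_c (of_nat l) k = fact l / fact (l - k)"
  using assms
proof (induction k)
  case 0 then show ?case by (simp add: ffact_c_def)
next
  case (Suc k)
  have "ffact_c (of_nat l) (Suc k) = ffact_c (of_nat l) k * (of_nat l - of_nat k)"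
    by (simp add: ffact_c_def)
  also have "\<dots> = fact l / fact (l - k) * of_nat (l - k)"
    using Suc by (simp add: of_nat_diff)
  also have "\<dots> = fact l / fact (l - Suc k)"
  proof -
    have B: "fact (l - k) = of_nat (l - k) * (fact (l - Suc k) :: complex)"
      using Suc.prems by (metis Suc_diff_le diff_Suc_Suc fact_Suc Suc_le_lessD
        Nat.diff_Suc_eq_diff_pred Suc_diff_Suc)
    have nz: "(of_nat (l - k) :: complex) \<noteq> 0" using Suc.prems by simp
    show ?thesis unfolding B using nz by (simp add: field_simps)
  qed
  finally show ?case .
qed

lemma ffact_gt:
  assumes "l < k"
  shows "ffact_c (of_nat l) k = 0"
  unfolding ffact_c_def using assms by (intro prod_zero) auto

lemma pc_id:
  fixes b d :: complex
  assumes b: "b \<noteq> 0" and d: "d \<noteq> 0"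
  shows "(-1) ^ N * poisson_charlier N (of_nat l) (- d / b) * d ^ l =
         fact l * (\<Sum>k=0..l. of_nat (N choose k) * b ^ k * d ^ (l - k) / fact (l - k))"
proof -
  define T where "T k = of_nat (N choose k) * b ^ k * (if k \<le> l then d ^ (l - k) * fact l / fact (l - k) else (0::complex))" for k
  have L: "(-1) ^ N * poisson_charlier N (of_nat l) (- d / b) * d ^ l = (\<Sum>k=0..N. T k)"
    unfolding poisson_charlier_def sum_distrib_left sum_distrib_right
  proof (rule sum.cong[OF refl])
    fix k assume k: "k \<in> {0..N}"
    have s: "(-1) ^ N * (-1) ^ (N - k) * (inverse (- d / b)) ^ k = (b / d) ^ k"
    proof -
      have A: "(-1::complex) ^ N = (-1) ^ (N - k) * (-1) ^ k" using k by (simp add: power_add[symmetric])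
      have B: "(-1::complex) ^ (N - k) * (-1) ^ (N - k) = 1"
        by (simp add: power_mult_distrib[symmetric])
      have "(-1::complex) ^ N * (-1) ^ (N - k) = ((-1) ^ (N - k) * (-1) ^ (N - k)) * (-1) ^ k"
        unfolding A by (simp only: mult_ac)
      then have "(-1::complex) ^ N * (-1) ^ (N - k) = (-1) ^ k" unfolding B by simp
      moreover have "inverse (- d / b) = (-1) * (b / d)" by simp
      moreover have "(-1::complex) ^ k * (- (b / d)) ^ k = (b / d) ^ k"
        by (simp add: power_mult_distrib[symmetric])
      ultimately show ?thesis by (simp add: mult.assoc[symmetric])
    qed
    show "(-1) ^ N * (of_nat (N choose k) * (-1) ^ (N - k) * inverse (- d / b) ^ k * ffact_c (of_nat l) k) * d ^ l = T k"
    proof (cases "k \<le> l")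
      case True
      have dl: "d ^ l = d ^ k * d ^ (l - k)" using True by (simp add: power_add[symmetric])
      have "(-1) ^ N * (of_nat (N choose k) * (-1) ^ (N - k) * inverse (- d / b) ^ k * ffact_c (of_nat l) k) * d ^ l
          = of_nat (N choose k) * ((-1) ^ N * (-1) ^ (N - k) * (inverse (- d / b)) ^ k) * ffact_c (of_nat l) k * d ^ l"
        by (simp only: mult_ac)
      also have "\<dots> = of_nat (N choose k) * (b / d) ^ k * (fact l / fact (l - k)) * (d ^ k * d ^ (l - k))"
        by (simp only: s ffact_le[OF True] dl)
      also have "\<dots> = T k" unfolding T_def using True d by (simp add: power_divide field_simps)
      finally show ?thesis .
    next
      case False
      then show ?thesis unfolding T_def by (simp add: ffact_gt)
    qed
  qed
  have R: "fact l * (\<Sum>k=0..l. of_nat (N choose k) * b ^ k * d ^ (l - k) / fact (l - k)) = (\<Sum>k=0..l. T k)"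
    unfolding sum_distrib_left T_def by (rule sum.cong) auto
  have "(\<Sum>k=0..N. T k) = (\<Sum>k=0..N+l. T k)"
    by (rule sum.mono_neutral_left) (auto simp: T_def)
  moreover have "(\<Sum>k=0..l. T k) = (\<Sum>k=0..N+l. T k)"
    by (rule sum.mono_neutral_left) (auto simp: T_def)
  ultimately show ?thesis using L R by simp
qed


lemma fact_aux:
  assumes "l \<le> n - 1" "n \<ge> 1"
  shows "(fact (n - 1) :: complex) * of_nat (n - l) = fact l * of_nat ((n - 1) choose l) * fact (n - l)"
proof -
  have "fact l * fact (n - 1 - l) * ((n - 1) choose l) = fact (n - 1)"
    using assms(1) by (rule binomial_fact_lemma)
  then have e: "(fact l * fact (n - 1 - l) * of_nat ((n - 1) choose l) :: complex) = fact (n - 1)"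
    by (metis of_nat_fact of_nat_mult)
  have "n - l = Suc (n - 1 - l)" using assms by arith
  then have f: "(fact (n - l) :: complex) = of_nat (n - l) * fact (n - 1 - l)"
    by (metis fact_Suc of_nat_fact of_nat_mult)
  show ?thesis unfolding f e[symmetric] by (simp only: mult_ac)
qed

theorem theorem10:
  fixes lam alpha b c :: complex and m :: nat and S :: "nat \<Rightarrow> complex poly"
  assumes "lam \<noteq> 1" and "b \<noteq> 0" and "c \<noteq> 0"
    and "sheffer
           (fps_cpow (fps_const (1 / (1 - lam)) * (fps_exp (lam - 1) - fps_const lam)) alpha)
           (fps_X * inverse (fps_exp c * (1 + fps_const b * fps_X) ^ m))
           S"
  shows "\<forall>n\<ge>1. \<forall>x. poly (S n) x =
           (-1) ^ (m * n) *
           (\<Sum>l=0..n-1. poisson_charlier (m * n) (of_nat l) (- (of_nat n * c) / b)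
                         * (of_nat n * c) ^ l * of_nat ((n - 1) choose l)
                         * frob_euler (n - l) alpha x lam)"
proof (intro allI impI)
  fix n :: nat and x :: complex
  assume n: "n \<ge> 1"
  define E where "E = fps_exp (lam - 1)"
  define h where "h = fps_const (1 / (1 - lam)) * (E - fps_const lam)"
  define g where "g = fps_cpow h alpha"
  define K where "K = fps_cpow (fps_const (1 - lam) * inverse (E - fps_const lam)) alpha"
  define phi where "phi = fps_exp c * (1 + fps_const b * fps_X) ^ m"
  define f where "f = fps_X * inverse phi"
  define fi where "fi = fps_inv f"
  define H where "H = K * fps_exp x"
  have l1: "1 - lam \<noteq> 0" using assms(1) by simp
  have h0: "h $ 0 = 1" unfolding h_def E_def using l1 by simp
  have ih: "inverse h = fps_const (1 - lam) * inverse (E - fps_const lam)"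
    unfolding h_def by (simp add: fps_inverse_mult fps_const_inverse)
  have Kg: "K * g = 1" unfolding K_def g_def ih[symmetric] by (rule cpow_inv[OF h0])
  have g0: "g $ 0 = 1" unfolding g_def fps_cpow_def by simp
  have ig: "inverse g = K"
  proof -
    have "g * inverse g = 1" using g0 by (simp add: inverse_mult_eq_1')
    then have "K * (g * inverse g) = K" by simp
    then show ?thesis using Kg by (simp add: mult.assoc[symmetric])
  qed
  have p0: "phi $ 0 = 1" unfolding phi_def by (simp add: binom_nth)
  have f0: "f $ 0 = 0" unfolding f_def by simp
  have f1: "f $ 1 \<noteq> 0" unfolding f_def using p0 by simp
  have fi0: "fi $ 0 = 0" unfolding fi_def fps_inv_def by simp
  have sh: "Abs_fps (\<lambda>k. poly (S k) x / fact k) = inverse (g oo fi) * (fps_exp x oo fi)"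
    using assms(4) unfolding sheffer_def g_def h_def E_def fi_def f_def phi_def by blast
  also have "inverse (g oo fi) = inverse g oo fi"
    by (rule fps_inverse_compose[OF fi0, symmetric]) (simp add: g0)
  also have "(inverse g oo fi) * (fps_exp x oo fi) = H oo fi"
    unfolding ig H_def by (rule fps_compose_mult_distrib[OF fi0, symmetric])
  finally have shn: "poly (S n) x / fact n = (H oo fi) $ n"
    by (metis fps_nth_Abs_fps)
  have comp: "(H oo fi) oo f = H"
    using fps_compose_assoc[OF f0 fi0, of H] fps_inv[OF f0 f1] unfolding fi_def by simp
  have lag: "(fps_deriv H * phi ^ n) $ (n - 1) = of_nat n * (H oo fi) $ n"
    using lagrange[OF _ n, of phi "H oo fi"] p0 unfolding comp f_def[symmetric] by simp
  have "poly (S n) x = fact n * (H oo fi) $ n"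
    using shn by (simp add: field_simps)
  also have "\<dots> = fact (n - 1) * (of_nat n * (H oo fi) $ n)"
  proof -
    obtain k where k: "n = Suc k" using n by (cases n) auto
    show ?thesis unfolding k by (simp add: fact_Suc mult.assoc)
  qed
  also have "\<dots> = fact (n - 1) * (phi ^ n * fps_deriv H) $ (n - 1)"
    using lag by (simp add: mult.commute)
  also have "\<dots> = (\<Sum>l=0..n-1. fact (n - 1) * ((phi ^ n) $ l * (of_nat (n - l) * H $ (n - l))))"
    unfolding fps_mult_nth sum_distrib_left
  proof (rule sum.cong[OF refl])
    fix l assume "l \<in> {0..n-1}"
    then have "n - 1 - l + 1 = n - l" using n by auto
    then show "fact (n - 1) * ((phi ^ n) $ l * fps_deriv H $ (n - 1 - l)) =
        fact (n - 1) * ((phi ^ n) $ l * (of_nat (n - l) * H $ (n - l)))"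
      by (simp only: fps_deriv_nth)
  qed
  also have "\<dots> = (-1) ^ (m * n) *
           (\<Sum>l=0..n-1. poisson_charlier (m * n) (of_nat l) (- (of_nat n * c) / b)
                         * (of_nat n * c) ^ l * of_nat ((n - 1) choose l)
                         * frob_euler (n - l) alpha x lam)"
    unfolding sum_distrib_left
  proof (rule sum.cong[OF refl])
    fix l assume l: "l \<in> {0..n-1}"
    have d: "of_nat n * c \<noteq> 0" using n assms(3) by simp
    have pc: "(-1) ^ (m * n) * poisson_charlier (m * n) (of_nat l) (- (of_nat n * c) / b) * (of_nat n * c) ^ l
        = fact l * (phi ^ n) $ l"
      unfolding phi_def phi_nth by (rule pc_id[OF assms(2) d])
    have fe: "frob_euler (n - l) alpha x lam = fact (n - l) * H $ (n - l)"
      unfolding frob_euler_def H_def K_def E_def by simp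
    have fa: "(fact (n - 1) :: complex) * of_nat (n - l) = fact l * of_nat ((n - 1) choose l) * fact (n - l)"
      using l n by (intro fact_aux) auto
    have "fact (n - 1) * ((phi ^ n) $ l * (of_nat (n - l) * H $ (n - l)))
        = (fact (n - 1) * of_nat (n - l)) * (phi ^ n) $ l * H $ (n - l)" by (simp only: mult_ac)
    also have "\<dots> = ((-1) ^ (m * n) * poisson_charlier (m * n) (of_nat l) (- (of_nat n * c) / b) * (of_nat n * c) ^ l)
        * of_nat ((n - 1) choose l) * (fact (n - l) * H $ (n - l))"
      unfolding fa pc by (simp only: mult_ac)
    finally show "fact (n - 1) * ((phi ^ n) $ l * (of_nat (n - l) * H $ (n - l))) =
        (-1) ^ (m * n) * (poisson_charlier (m * n) (of_nat l) (- (of_nat n * c) / b)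
                         * (of_nat n * c) ^ l * of_nat ((n - 1) choose l)
                         * frob_euler (n - l) alpha x lam)"
      unfolding fe by (simp only: mult_ac)
  qed
  finally show "poly (S n) x = (-1) ^ (m * n) *
           (\<Sum>l=0..n-1. poisson_charlier (m * n) (of_nat l) (- (of_nat n * c) / b)
                         * (of_nat n * c) ^ l * of_nat ((n - 1) choose l)
                         * frob_euler (n - l) alpha x lam)" .
qed

end
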